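(* Let $T$ be an expanding Markov map with a finite partition, $x\in[0,1]$ and $\kappa>0$. Then $\{y\in[0,1]:\overline R(x,y)>1/\kappa\}\subset\mathcal B^\kappa(x)\subset\{y\in[0,1]:\overline R(x,y)\ge1/\kappa\}$ and $\{y\in[0,1]:\overline R(x,y)<1/\kappa\}\subset\mathcal U^\kappa(x)\subset\{y\in[0,1]:\overline R(x,y)\le1/\kappa\}$.
   Context: An expanding Markov map with a finite partition is a map $T:[0,1]\to[0,1]$ for which there are points $0=a_0<\dots<a_Q=1$, with $I(i)=(a_i,a_{i+1})$, such that: (1) there are $n_0\in\mathbb N$, $\rho>1$ with $|(T^{n_0})'|\ge\rho$; (2) $T$ is strictly monotonic on each $I(i)$ and extends to a $C^2$ function on each $\overline{I(i)}$; (3) if $I(j)\cap T(I(k))\ne\emptyset$ then $I(j)\subset T(I(k))$; (4) there is $R$ with $I(j)\subset\bigcup_{n=1}^RT^n(I(k))$ for all $j,k$; (5) for every $k$, $\sup_{(x,y,z)\in I(k)^3}|T''(x)|/(|T'(y)||T'(z)|)<\infty$. $B(z,r)$ is the open ball. $\mathcal U^\kappa(x)=\bigcup_{i\ge1}\bigcap_{N\ge i}\bigcup_{n=1}^NB(T^nx,N^{-\kappa})$, $\mathcal B^\kappa(x)=[0,1]\setminus\mathcal U^\kappa(x)$. Hitting time: $\tau_r(x,y)=\inf\{n\ge1:T^nx\in B(y,r)\}$, and $\overline R(x,y)=\limsup_{r\to0}\frac{\log\tau_r(x,y)}{-\log r}$, with the convention that if $\{T^nx:n\ge1\}\cap B(y,r)=\emptyset$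 for some $r>0$ then $\tau_r(x,y)=\infty$ and $\overline R(x,y)=\infty$. *)

theory Defs
  imports "HOL-Analysis.Analysis" "HOL-Library.Extended_Nat"
begin

definition part_int :: "(nat \<Rightarrow> real) \<Rightarrow> nat \<Rightarrow> real set" where
  "part_int a i = {a i <..< a (Suc i)}"

definition C2_extends_on :: "(real \<Rightarrow> real) \<Rightarrow> real \<Rightarrow> real \<Rightarrow> bool" where
  "C2_extends_on T lo hi \<longleftrightarrow>
     (\<exists>g g1 g2. (\<forall>y\<in>{lo..hi}. (g has_real_derivative g1 y) (at y within {lo..hi})
                          \<and> (g1 has_real_derivative g2 y) (at y within {lo..hi}))
               \<and> continuous_on {lo..hi} g2
               \<and> (\<forall>y\<in>{lo<..<hi}. g y = T y))"

definition expanding_markov_map :: "(real \<Rightarrow> real) \<Rightarrow> bool" where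
  "expanding_markov_map T \<longleftrightarrow>
     (\<forall>x\<in>{0..1}. T x \<in> {0..1}) \<and>
     (\<exists>(Q::nat) (a::nat \<Rightarrow> real).
        Q \<ge> 1 \<and> a 0 = 0 \<and> a Q = 1 \<and> (\<forall>i<Q. a i < a (Suc i)) \<and>
        \<comment> \<open>(1) uniform expansion of an iterate (where T^n0 is differentiable,
              i.e. along orbits staying in the open partition intervals)\<close>
        (\<exists>(n0::nat) (\<rho>::real). n0 \<ge> 1 \<and> \<rho> > 1 \<and>
            (\<forall>x. (\<forall>k<n0. \<exists>i<Q. (T^^k) x \<in> part_int a i) \<longrightarrow>
                 (\<exists>D. ((T^^n0) has_real_derivative D) (at x) \<and> \<bar>D\<bar> \<ge> \<rho>))) \<and>
        \<comment> \<open>(2) strictly monotone, C^2 extension to the closure\<close>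
        (\<forall>i<Q. (strict_mono_on (part_int a i) T \<or> strict_antimono_on (part_int a i) T)
               \<and> C2_extends_on T (a i) (a (Suc i))) \<and>
        \<comment> \<open>(3) Markov property\<close>
        (\<forall>j<Q. \<forall>k<Q. part_int a j \<inter> T ` part_int a k \<noteq> {} \<longrightarrow>
                      part_int a j \<subseteq> T ` part_int a k) \<and>
        \<comment> \<open>(4) transitivity\<close>
        (\<exists>R::nat. \<forall>j<Q. \<forall>k<Q. part_int a j \<subseteq> (\<Union>n\<in>{1..R}. (T^^n) ` part_int a k)) \<and>
        \<comment> \<open>(5) bounded distortion: sup |T''(x)|/(|T'(y)||T'(z)|) < \<infinity>\<close>
        (\<forall>k<Q. \<exists>C::real. \<forall>x\<in>part_int a k. \<forall>y\<in>part_int a k. \<forall>z\<in>part_int a k.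
              \<bar>deriv (deriv T) x\<bar> \<le> C * \<bar>deriv T y\<bar> * \<bar>deriv T z\<bar>))"

definition U_set :: "(real \<Rightarrow> real) \<Rightarrow> real \<Rightarrow> real \<Rightarrow> real set" where
  "U_set T \<kappa> x = (\<Union>i\<in>{1..}. \<Inter>N\<in>{i..}. \<Union>n\<in>{1..N}. (ball ((T^^n) x) (real N powr (-\<kappa>)) \<inter> {0..1}))"

definition B_set :: "(real \<Rightarrow> real) \<Rightarrow> real \<Rightarrow> real \<Rightarrow> real set" where
  "B_set T \<kappa> x = {0..1} - U_set T \<kappa> x"

definition hit_time :: "(real \<Rightarrow> real) \<Rightarrow> real \<Rightarrow> real \<Rightarrow> real \<Rightarrow> enat" where
  "hit_time T r x y =
     (if \<exists>n::nat. n \<ge> 1 \<and> (T^^n) x \<in> ball y r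
      then enat (LEAST n::nat. n \<ge> 1 \<and> (T^^n) x \<in> ball y r) else \<infinity>)"

definition R_upper :: "(real \<Rightarrow> real) \<Rightarrow> real \<Rightarrow> real \<Rightarrow> ereal" where
  "R_upper T x y =
     (if \<exists>r>0. hit_time T r x y = \<infinity> then \<infinity>
      else Limsup (at_right 0)
             (\<lambda>r. ereal (ln (real (the_enat (hit_time T r x y))) / (- ln r))))"

end

theory Submission
  imports Defs
begin

definition hits :: "(real \<Rightarrow> real) \<Rightarrow> real \<Rightarrow> real \<Rightarrow> real \<Rightarrow> nat \<Rightarrow> bool" where
  "hits T r x y N \<longleftrightarrow> (\<exists>n\<in>{1..N}. (T^^n) x \<in> ball y r)"

lemma hit_time_le_iff: "hit_time T r x y \<le> enat N \<longleftrightarrow> hits T r x y N"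
proof (cases "\<exists>n::nat. n \<ge> 1 \<and> (T^^n) x \<in> ball y r")
  case True
  let ?L = "LEAST n::nat. n \<ge> 1 \<and> (T^^n) x \<in> ball y r"
  have L: "?L \<ge> 1 \<and> (T^^?L) x \<in> ball y r" using LeastI_ex[OF True] .
  have "hit_time T r x y = enat ?L" using True by (simp add: hit_time_def)
  moreover have "?L \<le> N \<longleftrightarrow> hits T r x y N"
  proof
    assume "?L \<le> N" then show "hits T r x y N" using L unfolding hits_def by auto
  next
    assume "hits T r x y N"
    then obtain n where "n \<in> {1..N}" "(T^^n) x \<in> ball y r" unfolding hits_def by blast
    then have "?L \<le> n" by (intro Least_le) auto
    then show "?L \<le> N" using \<open>n \<in> {1..N}\<close> by auto
  qed
  ultimately show ?thesis by simp
next
  case False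
  then show ?thesis by (auto simp: hit_time_def hits_def)
qed

lemma hits_mono: "hits T r x y N \<Longrightarrow> r \<le> r' \<Longrightarrow> hits T r' x y N"
  unfolding hits_def by force

lemma U_iff:
  shows "y \<in> U_set T \<kappa> x \<longleftrightarrow> y \<in> {0..1} \<and> (\<exists>i\<ge>1. \<forall>N\<ge>i. hits T (real N powr (-\<kappa>)) x y N)"
proof
  assume "y \<in> U_set T \<kappa> x"
  then obtain i where i: "i \<ge> 1" "\<And>N. N \<ge> i \<Longrightarrow> \<exists>n\<in>{1..N}. y \<in> ball ((T^^n) x) (real N powr (-\<kappa>)) \<inter> {0..1}"
    unfolding U_set_def by auto
  from i(2)[of i] have "y \<in> {0..1}" by auto
  moreover have "\<forall>N\<ge>i. hits T (real N powr (-\<kappa>)) x y N"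
    using i(2) unfolding hits_def by (force simp: dist_commute)
  ultimately show "y \<in> {0..1} \<and> (\<exists>i\<ge>1. \<forall>N\<ge>i. hits T (real N powr (-\<kappa>)) x y N)" using i(1) by blast
next
  assume a: "y \<in> {0..1} \<and> (\<exists>i\<ge>1. \<forall>N\<ge>i. hits T (real N powr (-\<kappa>)) x y N)"
  then obtain i where i: "i \<ge> 1" "\<And>N. N \<ge> i \<Longrightarrow> hits T (real N powr (-\<kappa>)) x y N" by auto
  have "\<And>N. N \<ge> i \<Longrightarrow> \<exists>n\<in>{1..N}. y \<in> ball ((T^^n) x) (real N powr (-\<kappa>)) \<inter> {0..1}"
    using i(2) a unfolding hits_def by (force simp: dist_commute)
  then show "y \<in> U_set T \<kappa> x" unfolding U_set_def using i(1) by blast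
qed

lemma small_powr:
  assumes "\<kappa> > 0" "d > 0"
  obtains i :: nat where "\<And>N. N \<ge> i \<Longrightarrow> real N powr (-\<kappa>) < d"
proof -
  have "((\<lambda>N::nat. real N powr (-\<kappa>)) \<longlongrightarrow> 0) sequentially"
    using assms by (intro tendsto_neg_powr filterlim_real_sequentially) auto
  then have "eventually (\<lambda>N::nat. real N powr (-\<kappa>) < d) sequentially"
    using assms by (intro order_tendstoD(2)) auto
  then show ?thesis using that unfolding eventually_sequentially by blast
qed

lemma partA:
  assumes k: "\<kappa> > 0" and y: "y \<in> {0..1}" and R: "R_upper T x y < ereal (1/\<kappa>)"
  shows "y \<in> U_set T \<kappa> x"
proof -
  have nf: "\<not>(\<exists>r>0. hit_time T r x y = \<infinity>)" using R by (auto simp: R_upper_def split: if_splits)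
  define f where "f r = ereal (ln (real (the_enat (hit_time T r x y))) / (- ln r))" for r
  have "Limsup (at_right 0) f < ereal (1/\<kappa>)" using R nf unfolding f_def[abs_def] by (simp add: R_upper_def)
  then have ev: "eventually (\<lambda>r. f r < ereal(1/\<kappa>)) (at_right 0)" by (rule Limsup_lessD)
  then obtain b where b: "b > 0" "\<And>r. r > 0 \<Longrightarrow> r < b \<Longrightarrow> f r < ereal(1/\<kappa>)"
    by (auto simp: eventually_at_right_field)
  define d where "d = min b 1"
  have "d > 0" using b by (simp add: d_def)
  then obtain i :: nat where i: "\<And>N. N \<ge> i \<Longrightarrow> real N powr (-\<kappa>) < d" using small_powr k by blast
  have "\<forall>N\<ge>max i 2. hits T (real N powr (-\<kappa>)) x y N"
  proof (intro allI impI)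
    fix N :: nat assume N: "max i 2 \<le> N"
    define r where "r = real N powr (-\<kappa>)"
    have r0: "r > 0" using N by (simp add: r_def)
    have rd: "r < d" using i N by (simp add: r_def)
    have lnN: "ln (real N) > 0" using N by simp
    have lnr: "ln r = - \<kappa> * ln (real N)" by (simp add: r_def)
    obtain t where t: "hit_time T r x y = enat t" using nf r0 by (cases "hit_time T r x y") auto
    have "f r < ereal (1/\<kappa>)" using b(2)[OF r0] rd by (simp add: d_def)
    then have "ln (real t) / (\<kappa> * ln (real N)) < 1/\<kappa>" by (simp add: f_def t lnr)
    then have "ln (real t) < ln (real N)" using k lnN by (simp add: field_simps)
    then have "t \<le> N"
      using N by (cases "t = 0") (auto simp: ln_less_cancel_iff)
    then have "hit_time T r x y \<le> enat N" using t by simp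
    then show "hits T r x y N" by (simp add: hit_time_le_iff)
  qed
  then show ?thesis using y by (subst U_iff) (metis max.cobounded2 one_le_numeral order_trans)
qed

lemma partB:
  assumes k: "\<kappa> > 0" and U: "y \<in> U_set T \<kappa> x"
  shows "R_upper T x y \<le> ereal (1/\<kappa>)"
proof -
  obtain i :: nat where i: "i \<ge> 1" "\<And>N. N \<ge> i \<Longrightarrow> hits T (real N powr (-\<kappa>)) x y N"
    using U by (auto simp: U_iff)
  have nf: "\<not>(\<exists>r>0. hit_time T r x y = \<infinity>)"
  proof
    assume "\<exists>r>0. hit_time T r x y = \<infinity>"
    then obtain r where r: "r > 0" "hit_time T r x y = \<infinity>" by blast
    obtain j :: nat where j: "\<And>N. N \<ge> j \<Longrightarrow> real N powr (-\<kappa>) < r" using small_powr k r(1) by blast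
    have "hits T (real (max i j) powr (-\<kappa>)) x y (max i j)" using i(2) by simp
    then have "hits T r x y (max i j)" using j[of "max i j"] by (auto intro: hits_mono)
    then have "hit_time T r x y \<le> enat (max i j)" by (simp add: hit_time_le_iff)
    then show False using r(2) by simp
  qed
  define f where "f = (\<lambda>r. ereal (ln (real (the_enat (hit_time T r x y))) / (- ln r)))"
  define g where "g = (\<lambda>r::real. ereal (ln 2 / (- ln r) + 1/\<kappa>))"
  have Rf: "R_upper T x y = Limsup (at_right 0) f" unfolding R_upper_def f_def by (rule if_not_P[OF nf])
  define b where "b = min (1/2) (real i powr (-\<kappa>))"
  have b0: "b > 0" using i(1) by (simp add: b_def)
  have "eventually (\<lambda>r. f r \<le> g r) (at_right 0)"
    unfolding eventually_at_right_field
  proof (intro exI[of _ b] conjI allI impI)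
    show "b > 0" by fact
    fix r :: real assume r0: "r > 0" and rb: "r < b"
    have r1: "r < 1" using rb by (simp add: b_def)
    define p where "p = r powr (-1/\<kappa>)"
    have "(real i powr (-\<kappa>)) powr (-1/\<kappa>) < p"
      unfolding p_def using rb r0 k by (intro powr_less_mono2_neg) (auto simp: b_def)
    moreover have "(real i powr (-\<kappa>)) powr (-1/\<kappa>) = real i"
      using k by (simp add: powr_powr)
    ultimately have pi: "real i < p" by simp
    have p1: "p \<ge> 1" using pi i(1) by simp
    define N where "N = nat \<lceil>p\<rceil>"
    have Np: "real N \<ge> p" "real N < p + 1" using p1 unfolding N_def by linarith+
    have Ni: "N \<ge> i" using pi Np by linarith
    have "real N powr (-\<kappa>) \<le> p powr (-\<kappa>)"
      using Np p1 k by (intro powr_mono2') auto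
    also have "p powr (-\<kappa>) = r" using k r0 by (simp add: p_def powr_powr)
    finally have "hits T r x y N" using i(2)[OF Ni] by (auto intro: hits_mono)
    then have ht: "hit_time T r x y \<le> enat N" by (simp add: hit_time_le_iff)
    obtain t where t: "hit_time T r x y = enat t" using nf r0 by (cases "hit_time T r x y") auto
    have tN: "real t \<le> 2 * p" using ht t Np p1 by simp
    have lnp: "ln p = (-1/\<kappa>) * ln r" by (simp add: p_def)
    have "ln (real t) \<le> ln (2 * p)"
    proof (cases "t = 0")
      case True then show ?thesis using p1 by simp
    next
      case False then show ?thesis using tN by simp
    qed
    also have "\<dots> = ln 2 + (-1/\<kappa>) * ln r" using p1 by (simp add: ln_mult lnp)
    finally have lt: "ln (real t) \<le> ln 2 + (-1/\<kappa>) * ln r" .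
    have lr: "- ln r > 0" using r0 r1 by simp
    have "ln (real t) / (- ln r) \<le> ln 2 / (- ln r) + 1/\<kappa>"
    proof -
      have "ln (real t) / (- ln r) \<le> (ln 2 + (-1/\<kappa>) * ln r) / (- ln r)"
        using lt lr by (intro divide_right_mono) auto
      also have "\<dots> = ln 2 / (- ln r) + 1/\<kappa>"
        using lr k by (simp add: field_simps)
      finally show ?thesis .
    qed
    then show "f r \<le> g r" by (simp add: f_def g_def t)
  qed
  then have "Limsup (at_right 0) f \<le> Limsup (at_right 0) g" by (rule Limsup_mono)
  also have "Limsup (at_right 0) g = ereal (1/\<kappa>)"
  proof (rule lim_imp_Limsup)
    show "\<not> trivial_limit (at_right (0::real))" by simp
    have "filterlim (\<lambda>r::real. - ln r) at_infinity (at_right 0)"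
      using ln_at_0 by (intro filterlim_at_top_imp_at_infinity) (simp add: filterlim_uminus_at_bot)
    then have "((\<lambda>r::real. ln 2 / (- ln r)) \<longlongrightarrow> 0) (at_right 0)"
      by (intro tendsto_divide_0[OF tendsto_const])
    then have "((\<lambda>r::real. ln 2 / (- ln r) + 1/\<kappa>) \<longlongrightarrow> 0 + 1/\<kappa>) (at_right 0)"
      by (intro tendsto_add tendsto_const)
    then show "(g \<longlongrightarrow> ereal (1/\<kappa>)) (at_right 0)" by (simp add: g_def)
  qed
  finally show ?thesis using Rf by simp
qed

theorem lemma4p2:
  fixes T :: "real \<Rightarrow> real" and x \<kappa> :: real
  assumes "expanding_markov_map T" and "x \<in> {0..1}" and "\<kappa> > 0"
  shows "{y\<in>{0..1}. R_upper T x y > ereal (1/\<kappa>)} \<subseteq> B_set T \<kappa> x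
       \<and> B_set T \<kappa> x \<subseteq> {y\<in>{0..1}. R_upper T x y \<ge> ereal (1/\<kappa>)}
       \<and> {y\<in>{0..1}. R_upper T x y < ereal (1/\<kappa>)} \<subseteq> U_set T \<kappa> x
       \<and> U_set T \<kappa> x \<subseteq> {y\<in>{0..1}. R_upper T x y \<le> ereal (1/\<kappa>)}"
proof -
  have U01: "U_set T \<kappa> x \<subseteq> {0..1}" by (auto simp: U_iff)
  have A: "y \<in> U_set T \<kappa> x" if "y \<in> {0..1}" "R_upper T x y < ereal (1/\<kappa>)" for y
    using partA[OF assms(3) that] .
  have B: "R_upper T x y \<le> ereal (1/\<kappa>)" if "y \<in> U_set T \<kappa> x" for y
    using partB[OF assms(3) that] .
  show ?thesis unfolding B_set_def
  proof (intro conjI subsetI)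
    fix y assume "y \<in> {y \<in> {0..1}. ereal (1 / \<kappa>) < R_upper T x y}"
    then show "y \<in> {0..1} - U_set T \<kappa> x" using B by (auto simp: not_le[symmetric])
  next
    fix y assume "y \<in> {0..1} - U_set T \<kappa> x"
    then show "y \<in> {y \<in> {0..1}. ereal (1 / \<kappa>) \<le> R_upper T x y}" using A by (auto simp: not_less[symmetric])
  next
    fix y assume "y \<in> {y \<in> {0..1}. R_upper T x y < ereal (1 / \<kappa>)}"
    then show "y \<in> U_set T \<kappa> x" using A by auto
  next
    fix y assume "y \<in> U_set T \<kappa> x"
    then show "y \<in> {y \<in> {0..1}. R_upper T x y \<le> ereal (1 / \<kappa>)}" using B U01 by auto
  qed
qed

end
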